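(* Let $n\ge5$ and consider generic twisted $n$-gons modulo projective equivalence with corner invariants $(x_1,y_1,\dots,x_n,y_n)$. The functions $O_n=\prod_{i=1}^n x_i$ and $E_n=\prod_{i=1}^n y_i$ are invariant under the pentagram map. When $n$ is even, the functions $O_{n/2}=\prod_{i\text{ even}}x_i+\prod_{i\text{ odd}}x_i$ and $E_{n/2}=\prod_{i\text{ even}}y_i+\prod_{i\text{ odd}}y_i$ (products over $1\le i\le n$) are also invariant under the pentagram map.
   Context: A twisted $n$-gon is a map $\phi:\mathbb{Z}\to\mathbb{RP}^2$ with $\phi(k+n)=M\circ\phi(k)$ for all $k$, for a fixed $M\in\mathrm{PGL}(3,\mathbb{R})$, such that $v_{i-1},v_i,v_{i+1}$ are in general position for all $i$, where $v_i=\phi(i)$. The cross ratio of four collinear points is $[t_1,t_2,t_3,t_4]=\frac{(t_1-t_2)(t_3-t_4)}{(t_1-t_3)(t_2-t_4)}$ in an affine parameter $t$ on the line. Writing $(p,q)$ for the line through $p,q$, the corner invariants are $x_i=[v_{i-2},v_{i-1},(v_{i-2},v_{i-1})\cap(v_i,v_{i+1}),(v_{i-2},v_{i-1})\cap(v_{i+1},v_{i+2})]$ and $y_i=[(v_{i-2},v_{i-1})\cap(v_{i+1},v_{i+2}),(v_{i-1},v_i)\cap(v_{i+1},v_{i+2}),v_{i+1},v_{i+2}]$; they are $n$-periodic and projectively invariant, giving coordinates on the space of generic twisted $n$-gons modulo projective equivalence. The pentagram map $T$ sends $\phi$ to the twisted $n$-gon whose vertices are the intersection points $(v_i,v_{i+2})\cap(v_{i+1},v_{i+3})$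 of consecutive shortest diagonals, with a fixed labelling convention (index shift). *)

theory Defs
  imports "HOL-Analysis.Analysis"
begin

text \<open>Points of RP^2 are represented by homogeneous coordinates: nonzero vectors in
  real^3, two vectors representing the same point iff they are proportional.
  The line through p, q has coordinates cross3 p q; the intersection point of the
  lines (p,q) and (r,s) is cross3 (cross3 p q) (cross3 r s).\<close>

definition proj_eq :: "real^3 \<Rightarrow> real^3 \<Rightarrow> bool" where
  "proj_eq p q \<longleftrightarrow> p \<noteq> 0 \<and> q \<noteq> 0 \<and> (\<exists>c. c \<noteq> 0 \<and> p = c *\<^sub>R q)"

definition line_meet :: "real^3 \<Rightarrow> real^3 \<Rightarrow> real^3 \<Rightarrow> real^3 \<Rightarrow> real^3" where
  "line_meet p q r s = cross3 (cross3 p q) (cross3 r s)"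

definition gen_pos :: "real^3 \<Rightarrow> real^3 \<Rightarrow> real^3 \<Rightarrow> bool" where
  "gen_pos a b c \<longleftrightarrow> a \<bullet> cross3 b c \<noteq> 0"

text \<open>Cross ratio of four collinear points, computed in an affine parameter t on the
  line: the line is parametrised by t \<mapsto> [A + t B] with A, B linearly independent,
  and the point p_k is [A + t_k B].  The value does not depend on the parametrisation.\<close>
definition cross_ratio :: "real^3 \<Rightarrow> real^3 \<Rightarrow> real^3 \<Rightarrow> real^3 \<Rightarrow> real" where
  "cross_ratio p1 p2 p3 p4 = (THE c. \<forall>A B t1 t2 t3 t4.
      (\<not> (\<exists>u. A = u *\<^sub>R B)) \<and> B \<noteq> 0 \<and>
      proj_eq p1 (A + t1 *\<^sub>R B) \<and> proj_eq p2 (A + t2 *\<^sub>R B) \<and>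
      proj_eq p3 (A + t3 *\<^sub>R B) \<and> proj_eq p4 (A + t4 *\<^sub>R B)
      \<longrightarrow> c = ((t1 - t2) * (t3 - t4)) / ((t1 - t3) * (t2 - t4)))"

text \<open>A twisted n-gon, given by a lift phi : int \<Rightarrow> real^3 of its vertices
  v_k = [phi k], with monodromy M in PGL(3,R) (represented by an invertible matrix).\<close>
definition twisted_ngon :: "nat \<Rightarrow> (int \<Rightarrow> real^3) \<Rightarrow> bool" where
  "twisted_ngon n phi \<longleftrightarrow>
     (\<forall>k. phi k \<noteq> 0) \<and>
     (\<exists>M :: real^3^3. invertible M \<and> (\<forall>k. proj_eq (phi (k + int n)) (M *v phi k))) \<and>
     (\<forall>i. gen_pos (phi (i - 1)) (phi i) (phi (i + 1)))"

definition corner_x :: "(int \<Rightarrow> real^3) \<Rightarrow> int \<Rightarrow> real" where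
  "corner_x v i = cross_ratio (v (i - 2)) (v (i - 1))
      (line_meet (v (i - 2)) (v (i - 1)) (v i) (v (i + 1)))
      (line_meet (v (i - 2)) (v (i - 1)) (v (i + 1)) (v (i + 2)))"

definition corner_y :: "(int \<Rightarrow> real^3) \<Rightarrow> int \<Rightarrow> real" where
  "corner_y v i = cross_ratio
      (line_meet (v (i - 2)) (v (i - 1)) (v (i + 1)) (v (i + 2)))
      (line_meet (v (i - 1)) (v i) (v (i + 1)) (v (i + 2)))
      (v (i + 1)) (v (i + 2))"

definition distinct_pt :: "real^3 \<Rightarrow> real^3 \<Rightarrow> bool" where
  "distinct_pt p q \<longleftrightarrow> p \<noteq> 0 \<and> q \<noteq> 0 \<and> \<not> proj_eq p q"

definition distinct4 :: "real^3 \<Rightarrow> real^3 \<Rightarrow> real^3 \<Rightarrow> real^3 \<Rightarrow> bool" where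
  "distinct4 a b c d \<longleftrightarrow> distinct_pt a b \<and> distinct_pt a c \<and> distinct_pt a d \<and>
     distinct_pt b c \<and> distinct_pt b d \<and> distinct_pt c d"

text \<open>Genericity: all points entering the corner invariants are well defined and the
  four points of each cross ratio are pairwise distinct, so the corner invariants
  are finite and well defined.\<close>
definition generic_twisted_ngon :: "nat \<Rightarrow> (int \<Rightarrow> real^3) \<Rightarrow> bool" where
  "generic_twisted_ngon n v \<longleftrightarrow> twisted_ngon n v \<and>
     (\<forall>i. distinct4 (v (i - 2)) (v (i - 1))
            (line_meet (v (i - 2)) (v (i - 1)) (v i) (v (i + 1)))
            (line_meet (v (i - 2)) (v (i - 1)) (v (i + 1)) (v (i + 2)))) \<and>
     (\<forall>i. distinct4 (line_meet (v (i - 2)) (v (i - 1)) (v (i + 1)) (v (i + 2)))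
            (line_meet (v (i - 1)) (v i) (v (i + 1)) (v (i + 2)))
            (v (i + 1)) (v (i + 2)))"

text \<open>The pentagram map, with the labelling convention
  T(v)_k = (v_k, v_{k+2}) \<inter> (v_{k+1}, v_{k+3}).\<close>
definition pentagram :: "(int \<Rightarrow> real^3) \<Rightarrow> int \<Rightarrow> real^3" where
  "pentagram v k = line_meet (v k) (v (k + 2)) (v (k + 1)) (v (k + 3))"

end

theory Submission
  imports Defs
begin

lemma CL1: "cross3 (a *\<^sub>R P + b *\<^sub>R Q) (c *\<^sub>R P + d *\<^sub>R Q) = (a*d - c*b) *\<^sub>R cross3 P Q"
  by (simp add: cross3_simps forall_3)
lemma CL2: "cross3 (c *\<^sub>R (A + t *\<^sub>R B)) (e *\<^sub>R (A + s *\<^sub>R B)) = (c*e*(s - t)) *\<^sub>R cross3 A B"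
  by (simp add: cross3_simps forall_3)

lemma dpt: assumes "distinct_pt p q" shows "cross3 p q \<noteq> 0"
proof
  assume "cross3 p q = 0"
  hence "collinear {0,p,q}" by (simp add: cross_eq_0)
  moreover have p0: "p \<noteq> 0" and q0: "q \<noteq> 0" using assms by (auto simp: distinct_pt_def)
  ultimately obtain c where c: "q = c *\<^sub>R p" by (auto simp: collinear_lemma)
  with q0 have "c \<noteq> 0" by auto
  hence "p = (1/c) *\<^sub>R q" using c by simp
  hence "proj_eq p q" using p0 q0 \<open>c \<noteq> 0\<close> unfolding proj_eq_def by (intro conjI exI[of _ "1/c"]) auto
  thus False using assms by (simp add: distinct_pt_def)
qed

lemma cr_alg:
  fixes nn kn c1 c2 c3 c4 t1 t2 t3 t4 :: real
  assumes "nn \<noteq> 0" "kn \<noteq> 0" "c1 \<noteq> 0" "c2 \<noteq> 0" "c3 \<noteq> 0" "c4 \<noteq> 0" "t1 \<noteq> t3" "t2 \<noteq> t4"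
  shows "((c1*c2*(t2-t1)*kn/nn) * (c3*c4*(t4-t3)*kn/nn)) / ((c1*c3*(t3-t1)*kn/nn)*(c2*c4*(t4-t2)*kn/nn))
      = ((t1 - t2) * (t3 - t4)) / ((t1 - t3) * (t2 - t4))"
proof -
  define K where "K = c1*c2*c3*c4*kn*kn/(nn*nn)"
  have K: "K \<noteq> 0" using assms by (simp add: K_def)
  have 1: "(c1*c2*(t2-t1)*kn/nn) * (c3*c4*(t4-t3)*kn/nn) = K * ((t1-t2)*(t3-t4))"
    by (simp add: K_def field_simps; simp add: algebra_simps)
  have 2: "(c1*c3*(t3-t1)*kn/nn)*(c2*c4*(t4-t2)*kn/nn) = K * ((t1-t3)*(t2-t4))"
    by (simp add: K_def field_simps; simp add: algebra_simps)
  show ?thesis unfolding 1 2 using K by simp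
qed

lemma proj_eqE: assumes "proj_eq p q" obtains c where "c \<noteq> 0" "p = c *\<^sub>R q"
  using assms unfolding proj_eq_def by auto

lemma cr_lemma:
  fixes P Q p1 p2 p3 p4 :: "real^3"
  assumes N: "cross3 P Q \<noteq> 0"
    and e1: "p1 = a1 *\<^sub>R P + b1 *\<^sub>R Q" and e2: "p2 = a2 *\<^sub>R P + b2 *\<^sub>R Q"
    and e3: "p3 = a3 *\<^sub>R P + b3 *\<^sub>R Q" and e4: "p4 = a4 *\<^sub>R P + b4 *\<^sub>R Q"
    and d: "distinct4 p1 p2 p3 p4"
  shows "cross_ratio p1 p2 p3 p4 = ((a1*b2 - a2*b1)*(a3*b4 - a4*b3)) / ((a1*b3 - a3*b1)*(a2*b4 - a4*b2))"
proof -
  let ?c0 = "((a1*b2 - a2*b1)*(a3*b4 - a4*b3)) / ((a1*b3 - a3*b1)*(a2*b4 - a4*b2))"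
  let ?N = "cross3 P Q"
  have c12: "cross3 p1 p2 = (a1*b2 - a2*b1) *\<^sub>R ?N" using e1 e2 CL1 by simp
  have c13: "cross3 p1 p3 = (a1*b3 - a3*b1) *\<^sub>R ?N" using e1 e3 CL1 by simp
  have c24: "cross3 p2 p4 = (a2*b4 - a4*b2) *\<^sub>R ?N" using e2 e4 CL1 by simp
  have c34: "cross3 p3 p4 = (a3*b4 - a4*b3) *\<^sub>R ?N" using e3 e4 CL1 by simp
  from d have d12: "distinct_pt p1 p2" and d13: "distinct_pt p1 p3" and d14: "distinct_pt p1 p4"
    and d23: "distinct_pt p2 p3" and d24: "distinct_pt p2 p4" and d34: "distinct_pt p3 p4"
    by (auto simp: distinct4_def)
  have D12: "a1*b2 - a2*b1 \<noteq> 0" using dpt[OF d12] c12 by auto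
  have D13: "a1*b3 - a3*b1 \<noteq> 0" using dpt[OF d13] c13 by auto
  have D24: "a2*b4 - a4*b2 \<noteq> 0" using dpt[OF d24] c24 by auto
  have nn: "?N \<bullet> ?N \<noteq> 0" using N by simp
  have key: "?c0 = ((t1 - t2) * (t3 - t4)) / ((t1 - t3) * (t2 - t4))"
    if h: "\<not> (\<exists>u. A = u *\<^sub>R B)" "B \<noteq> 0" "proj_eq p1 (A + t1 *\<^sub>R B)" "proj_eq p2 (A + t2 *\<^sub>R B)"
      "proj_eq p3 (A + t3 *\<^sub>R B)" "proj_eq p4 (A + t4 *\<^sub>R B)" for A B t1 t2 t3 t4
  proof -
    obtain c1 where c1: "c1 \<noteq> 0" "p1 = c1 *\<^sub>R (A + t1 *\<^sub>R B)" using h(3) by (rule proj_eqE)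
    obtain c2 where c2: "c2 \<noteq> 0" "p2 = c2 *\<^sub>R (A + t2 *\<^sub>R B)" using h(4) by (rule proj_eqE)
    obtain c3 where c3: "c3 \<noteq> 0" "p3 = c3 *\<^sub>R (A + t3 *\<^sub>R B)" using h(5) by (rule proj_eqE)
    obtain c4 where c4: "c4 \<noteq> 0" "p4 = c4 *\<^sub>R (A + t4 *\<^sub>R B)" using h(6) by (rule proj_eqE)
    let ?K = "cross3 A B"
    let ?kn = "?K \<bullet> ?N" let ?nn = "?N \<bullet> ?N"
    have g: "(a *\<^sub>R ?N = b *\<^sub>R ?K) \<Longrightarrow> a = b * ?kn / ?nn" for a b
    proof -
      assume "a *\<^sub>R ?N = b *\<^sub>R ?K"
      hence "(a *\<^sub>R ?N) \<bullet> ?N = (b *\<^sub>R ?K) \<bullet> ?N" by simp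
      hence "a * ?nn = b * ?kn" by simp
      thus ?thesis using nn by (simp add: field_simps)
    qed
    have E12: "a1*b2 - a2*b1 = c1*c2*(t2-t1) * ?kn / ?nn"
      by (rule g) (metis c12 c1(2) c2(2) CL2)
    have E13: "a1*b3 - a3*b1 = c1*c3*(t3-t1) * ?kn / ?nn"
      by (rule g) (metis c13 c1(2) c3(2) CL2)
    have E24: "a2*b4 - a4*b2 = c2*c4*(t4-t2) * ?kn / ?nn"
      by (rule g) (metis c24 c2(2) c4(2) CL2)
    have E34: "a3*b4 - a4*b3 = c3*c4*(t4-t3) * ?kn / ?nn"
      by (rule g) (metis c34 c3(2) c4(2) CL2)
    have kn: "?kn \<noteq> 0" using D12 E12 by auto
    have t13: "t1 \<noteq> t3" using D13 E13 by auto
    have t24: "t2 \<noteq> t4" using D24 E24 by auto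
    show ?thesis unfolding E12 E13 E24 E34
      by (rule cr_alg[OF nn kn c1(1) c2(1) c3(1) c4(1) t13 t24])
  qed
  \<comment> \<open>existence of a parametrisation\<close>
  define s where "s = 1 + \<bar>b1/a1\<bar> + \<bar>b2/a2\<bar> + \<bar>b3/a3\<bar> + \<bar>b4/a4\<bar>"
  have ne: "b - s*a \<noteq> 0" if "a *\<^sub>R P + b *\<^sub>R Q \<noteq> 0" "\<bar>b/a\<bar> < s" for a b
  proof
    assume z: "b - s*a = 0"
    show False
    proof (cases "a = 0")
      case True then show ?thesis using z that by simp
    next
      case False
      hence "b/a = s" using z by (simp add: field_simps)
      thus ?thesis using that(2) by simp
    qed
  qed
  have p0: "p1 \<noteq> 0" "p2 \<noteq> 0" "p3 \<noteq> 0" "p4 \<noteq> 0" using d12 d34 by (auto simp: distinct_pt_def)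
  have s1: "\<bar>b1/a1\<bar> < s" "\<bar>b2/a2\<bar> < s" "\<bar>b3/a3\<bar> < s" "\<bar>b4/a4\<bar> < s" unfolding s_def using abs_ge_zero[of "b1/a1"] abs_ge_zero[of "b2/a2"] abs_ge_zero[of "b3/a3"] abs_ge_zero[of "b4/a4"] by linarith+
  have ee: "b1 - s*a1 \<noteq> 0" "b2 - s*a2 \<noteq> 0" "b3 - s*a3 \<noteq> 0" "b4 - s*a4 \<noteq> 0"
    using ne p0 s1 e1 e2 e3 e4 by auto
  let ?A = "Q" let ?B = "P + s *\<^sub>R Q"
  have rep: "a *\<^sub>R P + b *\<^sub>R Q = (b - s*a) *\<^sub>R (?A + (a/(b - s*a)) *\<^sub>R ?B)" if "b - s*a \<noteq> 0" for a b
  proof -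
    have "(b - s*a) *\<^sub>R (?A + (a/(b - s*a)) *\<^sub>R ?B) = (b - s*a) *\<^sub>R Q + ((b - s*a) * (a/(b - s*a))) *\<^sub>R (P + s *\<^sub>R Q)"
      by (simp add: scaleR_add_right)
    also have "\<dots> = (b - s*a) *\<^sub>R Q + a *\<^sub>R (P + s *\<^sub>R Q)" using that by simp
    also have "\<dots> = a *\<^sub>R P + b *\<^sub>R Q" by (simp add: scaleR_add_right scaleR_diff_left algebra_simps)
    finally show ?thesis by simp
  qed
  have pe: "proj_eq (a *\<^sub>R P + b *\<^sub>R Q) (?A + (a/(b - s*a)) *\<^sub>R ?B)"
    if "b - s*a \<noteq> 0" "a *\<^sub>R P + b *\<^sub>R Q \<noteq> 0" for a b
  proof -
    have "?A + (a/(b - s*a)) *\<^sub>R ?B \<noteq> 0" using rep[OF that(1)] that by auto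
    thus ?thesis unfolding proj_eq_def using that rep[OF that(1)] by blast
  qed
  have nAB: "\<not> (\<exists>u. ?A = u *\<^sub>R ?B)"
  proof
    assume "\<exists>u. ?A = u *\<^sub>R ?B"
    then obtain u where u: "Q = u *\<^sub>R (P + s *\<^sub>R Q)" by blast
    hence "cross3 Q Q = cross3 (u *\<^sub>R (P + s *\<^sub>R Q)) Q" by simp
    hence "0 = u *\<^sub>R cross3 P Q" by (simp add: cross_mult_left cross_add_left cross_mult_left)
    hence "u = 0" using N by simp
    thus False using u N by simp
  qed
  have B0: "?B \<noteq> 0"
  proof
    assume "?B = 0"
    hence "cross3 ?B Q = 0" by simp
    thus False using N by (simp add: cross_add_left cross_mult_left)
  qed
  have wit: "\<not> (\<exists>u. ?A = u *\<^sub>R ?B) \<and> ?B \<noteq> 0 \<and>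
      proj_eq p1 (?A + (a1/(b1 - s*a1)) *\<^sub>R ?B) \<and> proj_eq p2 (?A + (a2/(b2 - s*a2)) *\<^sub>R ?B) \<and>
      proj_eq p3 (?A + (a3/(b3 - s*a3)) *\<^sub>R ?B) \<and> proj_eq p4 (?A + (a4/(b4 - s*a4)) *\<^sub>R ?B)"
    using nAB B0 pe ee p0 e1 e2 e3 e4 by simp
  show ?thesis
    unfolding cross_ratio_def
  proof (rule the_equality)
    show "\<forall>A B t1 t2 t3 t4. \<not> (\<exists>u. A = u *\<^sub>R B) \<and> B \<noteq> 0 \<and> proj_eq p1 (A + t1 *\<^sub>R B) \<and>
        proj_eq p2 (A + t2 *\<^sub>R B) \<and> proj_eq p3 (A + t3 *\<^sub>R B) \<and> proj_eq p4 (A + t4 *\<^sub>R B) \<longrightarrow>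
        ?c0 = (t1 - t2) * (t3 - t4) / ((t1 - t3) * (t2 - t4))"
      using key by blast
  next
    fix c assume "\<forall>A B t1 t2 t3 t4. \<not> (\<exists>u. A = u *\<^sub>R B) \<and> B \<noteq> 0 \<and> proj_eq p1 (A + t1 *\<^sub>R B) \<and>
        proj_eq p2 (A + t2 *\<^sub>R B) \<and> proj_eq p3 (A + t3 *\<^sub>R B) \<and> proj_eq p4 (A + t4 *\<^sub>R B) \<longrightarrow>
        c = (t1 - t2) * (t3 - t4) / ((t1 - t3) * (t2 - t4))"
    from this[rule_format, OF wit] key[OF wit[THEN conjunct1] wit[THEN conjunct2, THEN conjunct1]
        wit[THEN conjunct2, THEN conjunct2, THEN conjunct1]
        wit[THEN conjunct2, THEN conjunct2, THEN conjunct2, THEN conjunct1]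
        wit[THEN conjunct2, THEN conjunct2, THEN conjunct2, THEN conjunct2, THEN conjunct1]
        wit[THEN conjunct2, THEN conjunct2, THEN conjunct2, THEN conjunct2, THEN conjunct2]]
    show "c = ?c0" by simp
  qed
qed
lemma Dnz: assumes "p = a *\<^sub>R P + b *\<^sub>R Q" "q = c *\<^sub>R P + d *\<^sub>R Q" "distinct_pt p q"
  shows "a*d - c*b \<noteq> 0"
  using dpt[OF assms(3)] assms(1,2) CL1 by auto

definition br :: "(int \<Rightarrow> real^3) \<Rightarrow> int \<Rightarrow> int \<Rightarrow> int \<Rightarrow> real" where
  "br u a b c = u a \<bullet> cross3 (u b) (u c)"

definition Xf :: "(int \<Rightarrow> real^3) \<Rightarrow> int \<Rightarrow> real" where
  "Xf u i = br u (i-2) (i-1) (i+1) * br u i (i+1) (i+2) / (br u (i-2) i (i+1) * br u (i-1) (i+1) (i+2))"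
definition Yf :: "(int \<Rightarrow> real^3) \<Rightarrow> int \<Rightarrow> real" where
  "Yf u i = br u (i-2) (i-1) i * br u (i-1) (i+1) (i+2) / (br u (i-2) (i-1) (i+1) * br u (i-1) i (i+2))"
definition Hf :: "(int \<Rightarrow> real^3) \<Rightarrow> int \<Rightarrow> real" where
  "Hf u j = br u (j-2) j (j+2) * br u (j-1) j (j+1) / (br u (j-2) j (j+1) * br u (j-1) j (j+2))"

lemma LM1: "cross3 (cross3 a b) (cross3 c d) = (a \<bullet> cross3 c d) *\<^sub>R b - (b \<bullet> cross3 c d) *\<^sub>R a"
  by (simp add: cross3_simps forall_3)
lemma LM2: "cross3 (cross3 a b) (cross3 c d) = (a \<bullet> cross3 b d) *\<^sub>R c - (a \<bullet> cross3 b c) *\<^sub>R d"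
  by (simp add: cross3_simps forall_3)
lemma Pl1: "- (b \<bullet> cross3 c d)*(a \<bullet> cross3 d e) + (b \<bullet> cross3 d e)*(a \<bullet> cross3 c d) = (a \<bullet> cross3 b d)*(c \<bullet> cross3 d e)"
  by (simp add: cross3_simps)
lemma Pl2: "- (a \<bullet> cross3 b e)*(b \<bullet> cross3 c d) + (b \<bullet> cross3 c e)*(a \<bullet> cross3 b d) = (a \<bullet> cross3 b c)*(b \<bullet> cross3 d e)"
  by (simp add: cross3_simps)
lemma rot1: "a \<bullet> cross3 b c = c \<bullet> cross3 a b"
  by (simp add: cross3_simps)
lemma rot2: "a \<bullet> cross3 b c = b \<bullet> cross3 c a"
  by (simp add: cross3_simps)

lemma cx_formula:
  assumes g: "gen_pos (u (i-2)) (u (i-1)) (u i)"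
   and d: "distinct4 (u (i - 2)) (u (i - 1)) (line_meet (u (i - 2)) (u (i - 1)) (u i) (u (i + 1)))
            (line_meet (u (i - 2)) (u (i - 1)) (u (i + 1)) (u (i + 2)))"
  shows "corner_x u i = Xf u i \<and> br u (i-2) i (i+1) \<noteq> 0 \<and> br u (i-1) (i+1) (i+2) \<noteq> 0"
proof -
  define a where "a = u (i-2)"
  define b where "b = u (i-1)"
  define c where "c = u i"
  define d where "d = u (i+1)"
  define e where "e = u (i+2)"
  have N: "cross3 a b \<noteq> 0" using g rot1[of a b c] by (auto simp: gen_pos_def a_def b_def c_def)
  have e1: "a = 1 *\<^sub>R a + 0 *\<^sub>R b" by simp
  have e2: "b = 0 *\<^sub>R a + 1 *\<^sub>R b" by simp
  have e3: "line_meet a b c d = (- (b \<bullet> cross3 c d)) *\<^sub>R a + (a \<bullet> cross3 c d) *\<^sub>R b"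
    by (simp add: line_meet_def LM1)
  have e4: "line_meet a b d e = (- (b \<bullet> cross3 d e)) *\<^sub>R a + (a \<bullet> cross3 d e) *\<^sub>R b"
    by (simp add: line_meet_def LM1)
  have dd: "distinct4 a b (line_meet a b c d) (line_meet a b d e)" using d by (simp add: a_def b_def c_def d_def e_def)
  have cr: "corner_x u i = cross_ratio a b (line_meet a b c d) (line_meet a b d e)"
    by (simp add: corner_x_def a_def b_def c_def d_def e_def)
  note R = cr_lemma[OF N e1 e2 e3 e4 dd]
  have n13: "1 * (a \<bullet> cross3 c d) - (- (b \<bullet> cross3 c d)) * 0 \<noteq> 0"
    using Dnz[OF e1 e3] dd by (auto simp: distinct4_def)
  have n24: "0 * (a \<bullet> cross3 d e) - (- (b \<bullet> cross3 d e)) * 1 \<noteq> 0"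
    using Dnz[OF e2 e4] dd by (auto simp: distinct4_def)
  have X: "Xf u i = (a \<bullet> cross3 b d)*(c \<bullet> cross3 d e) / ((a \<bullet> cross3 c d) * (b \<bullet> cross3 d e))"
    by (simp add: Xf_def br_def a_def b_def c_def d_def e_def)
  have num: "(1 * 1 - 0 * 0) * (- (b \<bullet> cross3 c d) * (a \<bullet> cross3 d e) - - (b \<bullet> cross3 d e) * (a \<bullet> cross3 c d))
     = (a \<bullet> cross3 b d)*(c \<bullet> cross3 d e)" using Pl1[of b c d a e] by simp
  have den: "(1 * (a \<bullet> cross3 c d) - - (b \<bullet> cross3 c d) * 0) * (0 * (a \<bullet> cross3 d e) - - (b \<bullet> cross3 d e) * 1)
     = (a \<bullet> cross3 c d) * (b \<bullet> cross3 d e)" by simp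
  have b1: "br u (i-2) i (i+1) = a \<bullet> cross3 c d" "br u (i-1) (i+1) (i+2) = b \<bullet> cross3 d e"
    by (simp_all add: br_def a_def b_def c_def d_def e_def)
  show ?thesis
    using n13 n24 unfolding cr R X num den b1 by simp
qed

lemma cy_formula:
  assumes g: "gen_pos (u i) (u (i+1)) (u (i+2))"
   and d: "distinct4 (line_meet (u (i - 2)) (u (i - 1)) (u (i + 1)) (u (i + 2)))
            (line_meet (u (i - 1)) (u i) (u (i + 1)) (u (i + 2))) (u (i + 1)) (u (i + 2))"
  shows "corner_y u i = Yf u i \<and> br u (i-2) (i-1) (i+1) \<noteq> 0 \<and> br u (i-1) i (i+2) \<noteq> 0"
proof -
  define a where "a = u (i-2)"
  define b where "b = u (i-1)"
  define c where "c = u i"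
  define d where "d = u (i+1)"
  define e where "e = u (i+2)"
  have N: "cross3 d e \<noteq> 0" using g rot2[of c d e] by (auto simp: gen_pos_def c_def d_def e_def)
  have e3: "d = 1 *\<^sub>R d + 0 *\<^sub>R e" by simp
  have e4: "e = 0 *\<^sub>R d + 1 *\<^sub>R e" by simp
  have e1: "line_meet a b d e = (a \<bullet> cross3 b e) *\<^sub>R d + (- (a \<bullet> cross3 b d)) *\<^sub>R e"
    by (simp add: line_meet_def LM2)
  have e2: "line_meet b c d e = (b \<bullet> cross3 c e) *\<^sub>R d + (- (b \<bullet> cross3 c d)) *\<^sub>R e"
    by (simp add: line_meet_def LM2)
  have dd: "distinct4 (line_meet a b d e) (line_meet b c d e) d e" using d by (simp add: a_def b_def c_def d_def e_def)
  have cr: "corner_y u i = cross_ratio (line_meet a b d e) (line_meet b c d e) d e"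
    by (simp add: corner_y_def a_def b_def c_def d_def e_def)
  note R = cr_lemma[OF N e1 e2 e3 e4 dd]
  have n13: "(a \<bullet> cross3 b e) * 0 - 1 * (- (a \<bullet> cross3 b d)) \<noteq> 0"
    using Dnz[OF e1 e3] dd by (auto simp: distinct4_def)
  have n24: "(b \<bullet> cross3 c e) * 1 - 0 * (- (b \<bullet> cross3 c d)) \<noteq> 0"
    using Dnz[OF e2 e4] dd by (auto simp: distinct4_def)
  have Y: "Yf u i = (a \<bullet> cross3 b c)*(b \<bullet> cross3 d e) / ((a \<bullet> cross3 b d) * (b \<bullet> cross3 c e))"
    by (simp add: Yf_def br_def a_def b_def c_def d_def e_def)
  have num: "((a \<bullet> cross3 b e) * - (b \<bullet> cross3 c d) - (b \<bullet> cross3 c e) * - (a \<bullet> cross3 b d)) * (1 * 1 - 0 * 0)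
     = (a \<bullet> cross3 b c)*(b \<bullet> cross3 d e)" using Pl2[of a b e c d] by simp
  have den: "((a \<bullet> cross3 b e) * 0 - 1 * - (a \<bullet> cross3 b d)) * ((b \<bullet> cross3 c e) * 1 - 0 * - (b \<bullet> cross3 c d))
     = (a \<bullet> cross3 b d) * (b \<bullet> cross3 c e)" by simp
  have b1: "br u (i-2) (i-1) (i+1) = a \<bullet> cross3 b d" "br u (i-1) i (i+2) = b \<bullet> cross3 c e"
    by (simp_all add: br_def a_def b_def c_def d_def e_def)
  show ?thesis
    using n13 n24 unfolding cr R Y num den b1 by simp
qed
lemma WA: "cross3 X Y \<bullet> cross3 (cross3 Y Z) (cross3 U V) = (X \<bullet> cross3 Y Z) * (U \<bullet> cross3 V Y)"
  by (simp add: cross3_simps)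
lemma WB: "cross3 U V \<bullet> cross3 (cross3 X Y) (cross3 Y Z) = (X \<bullet> cross3 Y Z) * (U \<bullet> cross3 V Y)"
  by (simp add: cross3_simps)
lemma P1: "cross3 a c \<bullet> cross3 (cross3 b d) (cross3 c e) = (a \<bullet> cross3 c e)*(b \<bullet> cross3 c d)"
  by (simp add: cross3_simps)
lemma P1': "cross3 b d \<bullet> cross3 (cross3 c e) (cross3 a c) = (a \<bullet> cross3 c e)*(b \<bullet> cross3 c d)"
  by (simp add: cross3_simps)
lemma P2: "cross3 a c \<bullet> cross3 (cross3 b d) (cross3 d f) = (b \<bullet> cross3 d f)*(a \<bullet> cross3 c d)"
  by (simp add: cross3_simps)
lemma P3': "cross3 c e \<bullet> cross3 (cross3 d f) (cross3 a c) = (a \<bullet> cross3 c e)*(c \<bullet> cross3 d f)"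
  by (simp add: cross3_simps)

lemma pw: "k1 = k+1 \<Longrightarrow> k2 = k+2 \<Longrightarrow> k3 = k+3 \<Longrightarrow>
  pentagram u k = cross3 (cross3 (u k) (u k2)) (cross3 (u k1) (u k3))"
  by (simp add: pentagram_def line_meet_def)

lemma Wbr:
  fixes u :: "int \<Rightarrow> real^3" and i :: int
  shows
  "br (pentagram u) (i-2) (i-1) (i+1) = br u (i-2) i (i+2) * br u (i-1) i (i+1) * (br u (i-1) (i+1) (i+3) * br u (i+1) (i+2) (i+4))"
  "br (pentagram u) i (i+1) (i+2) = br u i (i+2) (i+4) * br u (i+1) (i+2) (i+3) * (br u (i+1) (i+3) (i+5) * br u (i+2) (i+3) (i+4))"
  "br (pentagram u) (i-2) i (i+1) = br u i (i+2) (i+4) * br u (i+1) (i+2) (i+3) * (br u (i-1) (i+1) (i+3) * br u (i-2) i (i+1))"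
  "br (pentagram u) (i-1) (i+1) (i+2) = br u (i+1) (i+3) (i+5) * br u (i+2) (i+3) (i+4) * (br u i (i+2) (i+4) * br u (i-1) (i+1) (i+2))"
  "br (pentagram u) (i-2) (i-1) i = br u (i-2) i (i+2) * br u (i-1) i (i+1) * (br u (i-1) (i+1) (i+3) * br u i (i+1) (i+2))"
  "br (pentagram u) (i-1) i (i+2) = br u (i-1) (i+1) (i+3) * br u i (i+1) (i+2) * (br u i (i+2) (i+4) * br u (i+2) (i+3) (i+5))"
proof -
  have w0: "pentagram u (i-2) = cross3 (cross3 (u (i-2)) (u i)) (cross3 (u (i-1)) (u (i+1)))" by (rule pw) arith+
  have w1: "pentagram u (i-1) = cross3 (cross3 (u (i-1)) (u (i+1))) (cross3 (u i) (u (i+2)))" by (rule pw) arith+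
  have w2: "pentagram u i = cross3 (cross3 (u i) (u (i+2))) (cross3 (u (i+1)) (u (i+3)))" by (rule pw) arith+
  have w3: "pentagram u (i+1) = cross3 (cross3 (u (i+1)) (u (i+3))) (cross3 (u (i+2)) (u (i+4)))" by (rule pw) arith+
  have w4: "pentagram u (i+2) = cross3 (cross3 (u (i+2)) (u (i+4))) (cross3 (u (i+3)) (u (i+5)))" by (rule pw) arith+
  note ws = w0 w1 w2 w3 w4
  show "br (pentagram u) (i-2) (i-1) (i+1) = br u (i-2) i (i+2) * br u (i-1) i (i+1) * (br u (i-1) (i+1) (i+3) * br u (i+1) (i+2) (i+4))"
    unfolding br_def ws WA WB P1 P1' P2 P3' by (simp add: mult_ac)
  show "br (pentagram u) i (i+1) (i+2) = br u i (i+2) (i+4) * br u (i+1) (i+2) (i+3) * (br u (i+1) (i+3) (i+5) * br u (i+2) (i+3) (i+4))"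
    unfolding br_def ws WA WB P1 P1' P2 P3' by (simp add: mult_ac)
  show "br (pentagram u) (i-2) i (i+1) = br u i (i+2) (i+4) * br u (i+1) (i+2) (i+3) * (br u (i-1) (i+1) (i+3) * br u (i-2) i (i+1))"
    unfolding br_def ws WA WB P1 P1' P2 P3' by (simp add: mult_ac)
  show "br (pentagram u) (i-1) (i+1) (i+2) = br u (i+1) (i+3) (i+5) * br u (i+2) (i+3) (i+4) * (br u i (i+2) (i+4) * br u (i-1) (i+1) (i+2))"
    unfolding br_def ws WA WB P1 P1' P2 P3' by (simp add: mult_ac)
  show "br (pentagram u) (i-2) (i-1) i = br u (i-2) i (i+2) * br u (i-1) i (i+1) * (br u (i-1) (i+1) (i+3) * br u i (i+1) (i+2))"
    unfolding br_def ws WA WB P1 P1' P2 P3' by (simp add: mult_ac)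
  show "br (pentagram u) (i-1) i (i+2) = br u (i-1) (i+1) (i+3) * br u i (i+1) (i+2) * (br u i (i+2) (i+4) * br u (i+2) (i+3) (i+5))"
    unfolding br_def ws WA WB P1 P1' P2 P3' by (simp add: mult_ac)
qed
lemma local_xy:
  fixes u :: "int \<Rightarrow> real^3" and i :: int
  assumes NL: "\<forall>j. br u j (j+2) (j+4) \<noteq> 0" and NC: "\<forall>j. br u j (j+1) (j+2) \<noteq> 0"
    and N23: "\<forall>j. br u j (j+2) (j+3) \<noteq> 0" and N13: "\<forall>j. br u j (j+1) (j+3) \<noteq> 0"
  shows "Xf (pentagram u) i = Xf u (i+1) * Hf u i / Hf u (i+2)"
    and "Yf (pentagram u) i = Yf u (i+2) * Hf u (i+3) / Hf u (i+1)"
proof -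
  have nz1: "br u (i-2) i (i+2) \<noteq> 0" using NL[rule_format, of "i-2"] by (simp add: algebra_simps)
  have nz2: "br u (i-1) (i+1) (i+3) \<noteq> 0" using NL[rule_format, of "i-1"] by (simp add: algebra_simps)
  have nz3: "br u i (i+2) (i+4) \<noteq> 0" using NL[rule_format, of "i"] by (simp add: algebra_simps)
  have nz4: "br u (i+1) (i+3) (i+5) \<noteq> 0" using NL[rule_format, of "i+1"] by (simp add: algebra_simps)
  have nz5: "br u (i+2) (i+4) (i+6) \<noteq> 0" using NL[rule_format, of "i+2"] by (simp add: algebra_simps)
  have nz6: "br u (i-2) (i-1) i \<noteq> 0" using NC[rule_format, of "i-2"] by (simp add: algebra_simps)
  have nz7: "br u (i-1) i (i+1) \<noteq> 0" using NC[rule_format, of "i-1"] by (simp add: algebra_simps)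
  have nz8: "br u i (i+1) (i+2) \<noteq> 0" using NC[rule_format, of "i"] by (simp add: algebra_simps)
  have nz9: "br u (i+1) (i+2) (i+3) \<noteq> 0" using NC[rule_format, of "i+1"] by (simp add: algebra_simps)
  have nz10: "br u (i+2) (i+3) (i+4) \<noteq> 0" using NC[rule_format, of "i+2"] by (simp add: algebra_simps)
  have nz11: "br u (i-2) i (i+1) \<noteq> 0" using N23[rule_format, of "i-2"] by (simp add: algebra_simps)
  have nz12: "br u (i-1) (i+1) (i+2) \<noteq> 0" using N23[rule_format, of "i-1"] by (simp add: algebra_simps)
  have nz13: "br u i (i+2) (i+3) \<noteq> 0" using N23[rule_format, of "i"] by (simp add: algebra_simps)
  have nz14: "br u (i+1) (i+3) (i+4) \<noteq> 0" using N23[rule_format, of "i+1"] by (simp add: algebra_simps)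
  have nz15: "br u (i+2) (i+4) (i+5) \<noteq> 0" using N23[rule_format, of "i+2"] by (simp add: algebra_simps)
  have nz16: "br u (i-2) (i-1) (i+1) \<noteq> 0" using N13[rule_format, of "i-2"] by (simp add: algebra_simps)
  have nz17: "br u (i-1) i (i+2) \<noteq> 0" using N13[rule_format, of "i-1"] by (simp add: algebra_simps)
  have nz18: "br u i (i+1) (i+3) \<noteq> 0" using N13[rule_format, of "i"] by (simp add: algebra_simps)
  have nz19: "br u (i+1) (i+2) (i+4) \<noteq> 0" using N13[rule_format, of "i+1"] by (simp add: algebra_simps)
  have nz20: "br u (i+2) (i+3) (i+5) \<noteq> 0" using N13[rule_format, of "i+2"] by (simp add: algebra_simps)
  note nz = nz1 nz2 nz3 nz4 nz5 nz6 nz7 nz8 nz9 nz10 nz11 nz12 nz13 nz14 nz15 nz16 nz17 nz18 nz19 nz20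
  have ix: "i + 1 - 2 = i - 1" "i + 1 - 1 = i" "i + 1 + 1 = i + 2" "i + 1 + 2 = i + 3"
     "i + 2 - 2 = i" "i + 2 - 1 = i + 1" "i + 2 + 1 = i + 3" "i + 2 + 2 = i + 4"
     "i + 3 - 2 = i + 1" "i + 3 - 1 = i + 2" "i + 3 + 1 = i + 4" "i + 3 + 2 = i + 5" by arith+
  show "Xf (pentagram u) i = Xf u (i+1) * Hf u i / Hf u (i+2)"
    unfolding Xf_def Hf_def Wbr ix using nz by (simp add: field_simps)
  show "Yf (pentagram u) i = Yf u (i+2) * Hf u (i+3) / Hf u (i+1)"
    unfolding Yf_def Hf_def Wbr ix using nz by (simp add: field_simps)
qed
lemma DM: "(M *v x) \<bullet> cross3 (M *v y) (M *v z) = det M * (x \<bullet> cross3 y z)" for M :: "real^3^3"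
  by (simp add: cross3_simps matrix_vector_mult_def sum_3)

lemma twisted_scale:
  assumes "twisted_ngon n u"
  obtains s M where "det M \<noteq> 0" "\<forall>k. s k \<noteq> 0" "\<forall>k. u (k + int n) = s k *\<^sub>R (M *v u k)"
proof -
  from assms obtain M :: "real^3^3" where M: "invertible M" "\<forall>k. proj_eq (u (k + int n)) (M *v u k)"
    unfolding twisted_ngon_def by blast
  have "\<forall>k. \<exists>c. c \<noteq> 0 \<and> u (k + int n) = c *\<^sub>R (M *v u k)" using M(2) by (auto simp: proj_eq_def)
  from choice[OF this] obtain s where "\<forall>k. s k \<noteq> 0 \<and> u (k + int n) = s k *\<^sub>R (M *v u k)" by blast
  moreover have "det M \<noteq> 0" using M(1) invertible_det_nz by blast
  ultimately show ?thesis using that by blast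
qed

lemma brn:
  assumes "\<forall>k. u (k + int n) = s k *\<^sub>R (M *v u k)"
  shows "br u (a + int n) (b + int n) (c + int n) = s a * s b * s c * det M * br u a b c"
  by (simp add: br_def assms DM cross_mult_left cross_mult_right)

lemma per_facts:
  assumes D: "det M \<noteq> 0" and S: "\<forall>k. s k \<noteq> 0" and U: "\<forall>k. u (k + int n) = s k *\<^sub>R (M *v u k)"
    and N23: "\<forall>j. br u j (j+2) (j+3) \<noteq> 0" and N13: "\<forall>j. br u j (j+1) (j+3) \<noteq> 0"
  shows "Xf u (i + int n) = Xf u i" "Yf u (i + int n) = Yf u i" "Hf u (i + int n) = Hf u i"
proof -
  have ix: "i + int n - 2 = i - 2 + int n" "i + int n - 1 = i - 1 + int n" "i + int n + 1 = i + 1 + int n"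
    "i + int n + 2 = i + 2 + int n" by arith+
  note B = brn[OF U]
  have n1: "br u (i-2) i (i+1) \<noteq> 0" using N23[rule_format, of "i-2"] by (simp add: algebra_simps)
  have n2: "br u (i-1) (i+1) (i+2) \<noteq> 0" using N23[rule_format, of "i-1"] by (simp add: algebra_simps)
  have n3: "br u (i-2) (i-1) (i+1) \<noteq> 0" using N13[rule_format, of "i-2"] by (simp add: algebra_simps)
  have n4: "br u (i-1) i (i+2) \<noteq> 0" using N13[rule_format, of "i-1"] by (simp add: algebra_simps)
  have sn: "s (i-2) \<noteq> 0" "s (i-1) \<noteq> 0" "s i \<noteq> 0" "s (i+1) \<noteq> 0" "s (i+2) \<noteq> 0" using S by auto
  show "Xf u (i + int n) = Xf u i" unfolding Xf_def ix B using n1 n2 sn D by (simp add: field_simps)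
  show "Yf u (i + int n) = Yf u i" unfolding Yf_def ix B using n3 n4 sn D by (simp add: field_simps)
  show "Hf u (i + int n) = Hf u i" unfolding Hf_def ix B using n1 n4 sn D by (simp add: field_simps)
qed

lemma gen_facts:
  assumes G: "generic_twisted_ngon n u"
  shows "corner_x u i = Xf u i" "corner_y u i = Yf u i"
    "br u j (j+1) (j+2) \<noteq> 0" "br u j (j+2) (j+3) \<noteq> 0" "br u j (j+1) (j+3) \<noteq> 0"
proof -
  have gp: "\<forall>i. gen_pos (u (i-1)) (u i) (u (i+1))" and d1: "\<forall>i. distinct4 (u (i - 2)) (u (i - 1))
            (line_meet (u (i - 2)) (u (i - 1)) (u i) (u (i + 1)))
            (line_meet (u (i - 2)) (u (i - 1)) (u (i + 1)) (u (i + 2)))"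
    and d2: "\<forall>i. distinct4 (line_meet (u (i - 2)) (u (i - 1)) (u (i + 1)) (u (i + 2)))
            (line_meet (u (i - 1)) (u i) (u (i + 1)) (u (i + 2)))
            (u (i + 1)) (u (i + 2))"
    using G by (auto simp: generic_twisted_ngon_def twisted_ngon_def)
  have g1: "gen_pos (u (k-2)) (u (k-1)) (u k)" for k using gp[rule_format, of "k-1"] by (simp add: algebra_simps)
  have g2: "gen_pos (u k) (u (k+1)) (u (k+2))" for k using gp[rule_format, of "k+1"] by (simp add: algebra_simps)
  have CX: "corner_x u k = Xf u k \<and> br u (k-2) k (k+1) \<noteq> 0 \<and> br u (k-1) (k+1) (k+2) \<noteq> 0" for k
    using cx_formula[OF g1 d1[rule_format, of k]] .
  have CY: "corner_y u k = Yf u k \<and> br u (k-2) (k-1) (k+1) \<noteq> 0 \<and> br u (k-1) k (k+2) \<noteq> 0" for k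
    using cy_formula[OF g2 d2[rule_format, of k]] .
  show "corner_x u i = Xf u i" using CX by blast
  show "corner_y u i = Yf u i" using CY by blast
  show "br u j (j+1) (j+2) \<noteq> 0" using gp[rule_format, of "j+1"] by (simp add: gen_pos_def br_def algebra_simps)
  show "br u j (j+2) (j+3) \<noteq> 0" using CX[of "j+2"] by (simp add: algebra_simps)
  show "br u j (j+1) (j+3) \<noteq> 0" using CY[of "j+2"] by (simp add: algebra_simps)
qed

lemma long_nz:
  assumes G: "generic_twisted_ngon n (pentagram u)"
  shows "br u j (j+2) (j+4) \<noteq> 0"
proof -
  have gp: "\<forall>i. gen_pos (pentagram u (i-1)) (pentagram u i) (pentagram u (i+1))"
    using G by (simp add: generic_twisted_ngon_def twisted_ngon_def)
  have "gen_pos (pentagram u (j+1-1)) (pentagram u (j+1)) (pentagram u (j+1+1))"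
    using gp by blast
  hence "br (pentagram u) (j+2-2) (j+2-1) (j+2) \<noteq> 0"
    by (simp add: gen_pos_def br_def algebra_simps)
  hence "br u (j+2-2) (j+2) (j+2+2) \<noteq> 0" unfolding Wbr by simp
  thus ?thesis by (simp add: algebra_simps)
qed
lemma prod_shift1:
  fixes f :: "int \<Rightarrow> real"
  assumes P: "\<forall>i. f (i + int n) = f i"
  shows "(\<Prod>i\<in>{1..int n}. f (i+1)) = (\<Prod>i\<in>{1..int n}. f i)"
proof (cases "n = 0")
  case True then show ?thesis by simp
next
  case False
  have "(\<Prod>i\<in>{1..int n}. f (i+1)) = prod f ((\<lambda>i. i+1) ` {1..int n})"
    by (subst prod.reindex) (auto simp: inj_on_def)
  also have "(\<lambda>i. i+1) ` {1..int n} = {2..1 + int n}" by (simp add: add.commute)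
  also have "\<dots> = insert (1 + int n) {2..int n}" using False by (subst atLeastAtMostPlus1_int_conv) auto
  also have "prod f \<dots> = f (1 + int n) * prod f {2..int n}" by simp
  also have "f (1 + int n) = f 1" using P[rule_format, of 1] by simp
  also have "f 1 * prod f {2..int n} = prod f (insert 1 {2..int n})" by simp
  also have "insert 1 {2..int n} = {1..int n}" using False by auto
  finally show ?thesis .
qed

lemma prod_shift_par:
  fixes f :: "int \<Rightarrow> real"
  assumes P: "\<forall>i. f (i + int n) = f i" and E: "even n"
  shows "(\<Prod>i\<in>{i\<in>{1..int n}. even i}. f (i+1)) = (\<Prod>i\<in>{i\<in>{1..int n}. odd i}. f i)"
    and "(\<Prod>i\<in>{i\<in>{1..int n}. odd i}. f (i+1)) = (\<Prod>i\<in>{i\<in>{1..int n}. even i}. f i)"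
proof -
  have en: "even (int n)" using E by simp
  define g where "g = (\<lambda>i::int. if odd i then f i else 1)"
  have "\<forall>i. g (i + int n) = g i" unfolding g_def using P en by auto
  from prod_shift1[OF this] have "(\<Prod>i\<in>{1..int n}. g (i+1)) = (\<Prod>i\<in>{1..int n}. g i)" .
  moreover have "(\<Prod>i\<in>{1..int n}. g (i+1)) = (\<Prod>i\<in>{i\<in>{1..int n}. even i}. f (i+1))"
    unfolding g_def by (subst prod.inter_filter) (auto intro!: prod.cong)
  moreover have "(\<Prod>i\<in>{1..int n}. g i) = (\<Prod>i\<in>{i\<in>{1..int n}. odd i}. f i)"
    unfolding g_def by (subst prod.inter_filter) (auto intro!: prod.cong)
  ultimately show "(\<Prod>i\<in>{i\<in>{1..int n}. even i}. f (i+1)) = (\<Prod>i\<in>{i\<in>{1..int n}. odd i}. f i)" by simp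
  define h where "h = (\<lambda>i::int. if even i then f i else 1)"
  have "\<forall>i. h (i + int n) = h i" unfolding h_def using P en by auto
  from prod_shift1[OF this] have "(\<Prod>i\<in>{1..int n}. h (i+1)) = (\<Prod>i\<in>{1..int n}. h i)" .
  moreover have "(\<Prod>i\<in>{1..int n}. h (i+1)) = (\<Prod>i\<in>{i\<in>{1..int n}. odd i}. f (i+1))"
    unfolding h_def by (subst prod.inter_filter) (auto intro!: prod.cong)
  moreover have "(\<Prod>i\<in>{1..int n}. h i) = (\<Prod>i\<in>{i\<in>{1..int n}. even i}. f i)"
    unfolding h_def by (subst prod.inter_filter) (auto intro!: prod.cong)
  ultimately show "(\<Prod>i\<in>{i\<in>{1..int n}. odd i}. f (i+1)) = (\<Prod>i\<in>{i\<in>{1..int n}. even i}. f i)" by simp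
qed

lemma telescope:
  fixes a b c d :: "int \<Rightarrow> real"
  assumes "finite A" "\<forall>i\<in>A. a i = b i * c i / d i" "prod c A = prod d A" "prod d A \<noteq> 0"
  shows "prod a A = prod b A"
proof -
  have "prod a A = prod (\<lambda>i. b i * c i / d i) A" using assms(2) by (intro prod.cong) auto
  also have "\<dots> = prod b A * prod c A / prod d A" by (simp add: prod.distrib prod_dividef)
  finally show ?thesis using assms(3,4) by simp
qed
lemma per_shift:
  fixes f :: "int \<Rightarrow> real"
  assumes "\<forall>i. f (i + int n) = f i" shows "\<forall>i. (\<lambda>i. f (i + c)) (i + int n) = (\<lambda>i. f (i + c)) i"
proof
  fix i
  have e: "i + int n + c = (i + c) + int n" by simp
  have "f (i + int n + c) = f (i + c)" unfolding e using assms by blast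
  thus "(\<lambda>i. f (i + c)) (i + int n) = (\<lambda>i. f (i + c)) i" by simp
qed

lemma prod_shift2:
  fixes f :: "int \<Rightarrow> real"
  assumes P: "\<forall>i. f (i + int n) = f i"
  shows "(\<Prod>i\<in>{1..int n}. f (i+2)) = (\<Prod>i\<in>{1..int n}. f i)"
proof -
  have "(\<Prod>i\<in>{1..int n}. (\<lambda>i. f (i + 1)) (i+1)) = (\<Prod>i\<in>{1..int n}. (\<lambda>i. f (i + 1)) i)"
    by (rule prod_shift1[OF per_shift[OF P]])
  also have "\<dots> = (\<Prod>i\<in>{1..int n}. f i)" by (rule prod_shift1[OF P])
  finally show ?thesis by (simp add: add.assoc)
qed

lemma prod_par2:
  fixes f :: "int \<Rightarrow> real"
  assumes P: "\<forall>i. f (i + int n) = f i" and E: "even n"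
  shows "(\<Prod>i\<in>{i\<in>{1..int n}. even i}. f (i+2)) = (\<Prod>i\<in>{i\<in>{1..int n}. even i}. f i)"
    and "(\<Prod>i\<in>{i\<in>{1..int n}. odd i}. f (i+2)) = (\<Prod>i\<in>{i\<in>{1..int n}. odd i}. f i)"
proof -
  note Q = prod_shift_par[OF per_shift[OF P, of 1] E]
  have "(\<Prod>i\<in>{i\<in>{1..int n}. even i}. (\<lambda>i. f (i + 1)) (i+1)) = (\<Prod>i\<in>{i\<in>{1..int n}. even i}. f i)"
    using Q(1) prod_shift_par(2)[OF P E] by simp
  thus "(\<Prod>i\<in>{i\<in>{1..int n}. even i}. f (i+2)) = (\<Prod>i\<in>{i\<in>{1..int n}. even i}. f i)"
    by (simp add: add.assoc)
  have "(\<Prod>i\<in>{i\<in>{1..int n}. odd i}. (\<lambda>i. f (i + 1)) (i+1)) = (\<Prod>i\<in>{i\<in>{1..int n}. odd i}. f i)"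
    using Q(2) prod_shift_par(1)[OF P E] by simp
  thus "(\<Prod>i\<in>{i\<in>{1..int n}. odd i}. f (i+2)) = (\<Prod>i\<in>{i\<in>{1..int n}. odd i}. f i)"
    by (simp add: add.assoc)
qed

theorem corollary2:
  fixes n :: nat and v :: "int \<Rightarrow> real^3"
  assumes "n \<ge> 5"
    and "generic_twisted_ngon n v"
    and "generic_twisted_ngon n (pentagram v)"
  shows "(\<Prod>i\<in>{1..int n}. corner_x (pentagram v) i) = (\<Prod>i\<in>{1..int n}. corner_x v i)
    \<and> (\<Prod>i\<in>{1..int n}. corner_y (pentagram v) i) = (\<Prod>i\<in>{1..int n}. corner_y v i)
    \<and> (even n \<longrightarrow>
           (\<Prod>i\<in>{i\<in>{1..int n}. even i}. corner_x (pentagram v) i)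
             + (\<Prod>i\<in>{i\<in>{1..int n}. odd i}. corner_x (pentagram v) i)
           = (\<Prod>i\<in>{i\<in>{1..int n}. even i}. corner_x v i)
             + (\<Prod>i\<in>{i\<in>{1..int n}. odd i}. corner_x v i))
    \<and> (even n \<longrightarrow>
           (\<Prod>i\<in>{i\<in>{1..int n}. even i}. corner_y (pentagram v) i)
             + (\<Prod>i\<in>{i\<in>{1..int n}. odd i}. corner_y (pentagram v) i)
           = (\<Prod>i\<in>{i\<in>{1..int n}. even i}. corner_y v i)
             + (\<Prod>i\<in>{i\<in>{1..int n}. odd i}. corner_y v i))"
proof -
  let ?w = "pentagram v"
  note GV = gen_facts[OF assms(2)]
  note GW = gen_facts[OF assms(3)]
  have NC: "\<forall>j. br v j (j+1) (j+2) \<noteq> 0" using GV(3) by blast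
  have N23: "\<forall>j. br v j (j+2) (j+3) \<noteq> 0" using GV(4) by blast
  have N13: "\<forall>j. br v j (j+1) (j+3) \<noteq> 0" using GV(5) by blast
  have NL: "\<forall>j. br v j (j+2) (j+4) \<noteq> 0" using long_nz[OF assms(3)] by blast
  have TW: "twisted_ngon n v" using assms(2) by (simp add: generic_twisted_ngon_def)
  obtain s M where D: "det M \<noteq> 0" and S: "\<forall>k. s k \<noteq> 0" and U: "\<forall>k. v (k + int n) = s k *\<^sub>R (M *v v k)"
    by (rule twisted_scale[OF TW])
  note PF = per_facts[OF D S U N23 N13]
  have PX: "\<forall>i. Xf v (i + int n) = Xf v i" using PF(1) by blast
  have PY: "\<forall>i. Yf v (i + int n) = Yf v i" using PF(2) by blast
  have PH: "\<forall>i. Hf v (i + int n) = Hf v i" using PF(3) by blast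
  have Hnz: "Hf v j \<noteq> 0" for j
  proof -
    have "br v (j-2) j (j+2) \<noteq> 0" using NL[rule_format, of "j-2"] by (simp add: algebra_simps)
    moreover have "br v (j-1) j (j+1) \<noteq> 0" using NC[rule_format, of "j-1"] by (simp add: algebra_simps)
    moreover have "br v (j-2) j (j+1) \<noteq> 0" using N23[rule_format, of "j-2"] by (simp add: algebra_simps)
    moreover have "br v (j-1) j (j+2) \<noteq> 0" using N13[rule_format, of "j-1"] by (simp add: algebra_simps)
    ultimately show ?thesis by (simp add: Hf_def)
  qed
  note LOC = local_xy[OF NL NC N23 N13]
  have LX: "\<forall>i\<in>A. corner_x ?w i = Xf v (i+1) * Hf v i / Hf v (i+2)" for A
    using GW(1) LOC(1) by simp
  have LY: "\<forall>i\<in>A. corner_y ?w i = Yf v (i+2) * Hf v (i+3) / Hf v (i+1)" for A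
    using GW(2) LOC(2) by simp
  have CX: "corner_x v i = Xf v i" for i using GV(1) by blast
  have CY: "corner_y v i = Yf v i" for i using GV(2) by blast
  have fin0: "finite {1..int n}" by simp
  have fin: "finite {1..int n}" "finite {i\<in>{1..int n}. even i}" "finite {i\<in>{1..int n}. odd i}"
    by (rule fin0) (rule finite_subset[OF _ fin0], blast)+
  have nzA: "prod f A \<noteq> 0" if "finite A" "\<forall>i. f i = Hf v (i + c)" for A f c
    using that Hnz by (simp add: prod_zero_iff)
  have PH1: "\<forall>i. (\<lambda>i. Hf v (i + 1)) (i + int n) = (\<lambda>i. Hf v (i + 1)) i" by (rule per_shift[OF PH])
  have x1: "(\<Prod>i\<in>{1..int n}. corner_x ?w i) = (\<Prod>i\<in>{1..int n}. Xf v (i+1))"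
  proof (rule telescope[OF fin(1) LX])
    show "prod (Hf v) {1..int n} = (\<Prod>i\<in>{1..int n}. Hf v (i+2))" using prod_shift2[OF PH] by simp
    show "(\<Prod>i\<in>{1..int n}. Hf v (i+2)) \<noteq> 0" by (rule nzA[OF fin(1), of _ 2]) simp
  qed
  have X1: "(\<Prod>i\<in>{1..int n}. corner_x ?w i) = (\<Prod>i\<in>{1..int n}. corner_x v i)"
    unfolding x1 CX by (rule prod_shift1[OF PX])
  have y1: "(\<Prod>i\<in>{1..int n}. corner_y ?w i) = (\<Prod>i\<in>{1..int n}. Yf v (i+2))"
  proof (rule telescope[OF fin(1) LY])
    show "(\<Prod>i\<in>{1..int n}. Hf v (i+3)) = (\<Prod>i\<in>{1..int n}. Hf v (i+1))"
      using prod_shift2[OF PH1] by (simp add: add.assoc)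
    show "(\<Prod>i\<in>{1..int n}. Hf v (i+1)) \<noteq> 0" by (rule nzA[OF fin(1), of _ 1]) simp
  qed
  have Y1: "(\<Prod>i\<in>{1..int n}. corner_y ?w i) = (\<Prod>i\<in>{1..int n}. corner_y v i)"
    unfolding y1 CY by (rule prod_shift2[OF PY])
  have EV: "(\<Prod>i\<in>{i\<in>{1..int n}. even i}. corner_x ?w i) + (\<Prod>i\<in>{i\<in>{1..int n}. odd i}. corner_x ?w i)
           = (\<Prod>i\<in>{i\<in>{1..int n}. even i}. corner_x v i) + (\<Prod>i\<in>{i\<in>{1..int n}. odd i}. corner_x v i)
       \<and> (\<Prod>i\<in>{i\<in>{1..int n}. even i}. corner_y ?w i) + (\<Prod>i\<in>{i\<in>{1..int n}. odd i}. corner_y ?w i)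
           = (\<Prod>i\<in>{i\<in>{1..int n}. even i}. corner_y v i) + (\<Prod>i\<in>{i\<in>{1..int n}. odd i}. corner_y v i)"
    if E: "even n"
  proof -
    have xe: "(\<Prod>i\<in>{i\<in>{1..int n}. even i}. corner_x ?w i) = (\<Prod>i\<in>{i\<in>{1..int n}. even i}. Xf v (i+1))"
    proof (rule telescope[OF fin(2) LX])
      show "prod (Hf v) {i\<in>{1..int n}. even i} = (\<Prod>i\<in>{i\<in>{1..int n}. even i}. Hf v (i+2))"
        using prod_par2(1)[OF PH E] by simp
      show "(\<Prod>i\<in>{i\<in>{1..int n}. even i}. Hf v (i+2)) \<noteq> 0" by (rule nzA[OF fin(2), of _ 2]) simp
    qed
    have xo: "(\<Prod>i\<in>{i\<in>{1..int n}. odd i}. corner_x ?w i) = (\<Prod>i\<in>{i\<in>{1..int n}. odd i}. Xf v (i+1))"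
    proof (rule telescope[OF fin(3) LX])
      show "prod (Hf v) {i\<in>{1..int n}. odd i} = (\<Prod>i\<in>{i\<in>{1..int n}. odd i}. Hf v (i+2))"
        using prod_par2(2)[OF PH E] by simp
      show "(\<Prod>i\<in>{i\<in>{1..int n}. odd i}. Hf v (i+2)) \<noteq> 0" by (rule nzA[OF fin(3), of _ 2]) simp
    qed
    have ye: "(\<Prod>i\<in>{i\<in>{1..int n}. even i}. corner_y ?w i) = (\<Prod>i\<in>{i\<in>{1..int n}. even i}. Yf v (i+2))"
    proof (rule telescope[OF fin(2) LY])
      show "(\<Prod>i\<in>{i\<in>{1..int n}. even i}. Hf v (i+3)) = (\<Prod>i\<in>{i\<in>{1..int n}. even i}. Hf v (i+1))"
        using prod_par2(1)[OF PH1 E] by (simp add: add.assoc)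
      show "(\<Prod>i\<in>{i\<in>{1..int n}. even i}. Hf v (i+1)) \<noteq> 0" by (rule nzA[OF fin(2), of _ 1]) simp
    qed
    have yo: "(\<Prod>i\<in>{i\<in>{1..int n}. odd i}. corner_y ?w i) = (\<Prod>i\<in>{i\<in>{1..int n}. odd i}. Yf v (i+2))"
    proof (rule telescope[OF fin(3) LY])
      show "(\<Prod>i\<in>{i\<in>{1..int n}. odd i}. Hf v (i+3)) = (\<Prod>i\<in>{i\<in>{1..int n}. odd i}. Hf v (i+1))"
        using prod_par2(2)[OF PH1 E] by (simp add: add.assoc)
      show "(\<Prod>i\<in>{i\<in>{1..int n}. odd i}. Hf v (i+1)) \<noteq> 0" by (rule nzA[OF fin(3), of _ 1]) simp
    qed
    show ?thesis
      unfolding xe xo ye yo CX CY prod_shift_par[OF PX E] prod_par2[OF PY E] by simp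
  qed
  show ?thesis using X1 Y1 EV by blast
qed
end
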